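(* Let $J\ge 2$ be an integer, $\tau_j=2^j$, and for $(\alpha,\beta)\in(0,\infty)\times(0,\pi]$ define $\nu_j(\alpha,\beta)=\dfrac{\alpha^2\{1-\cos(\beta\tau_j/2)\}^2}{\tau_j^2\{1-\cos\beta\}}$ for $j=1,\dots,J$. Then the map $(\alpha,\beta)\mapsto[\nu_j(\alpha,\beta)]_{j=1,\dots,J}$ is injective on $(0,\infty)\times(0,\pi]$: if $\nu_j(\alpha_1,\beta_1)=\nu_j(\alpha_2,\beta_2)$ for all $j=1,\dots,J$, then $(\alpha_1,\beta_1)=(\alpha_2,\beta_2)$.
   Context: $\nu_j(\alpha,\beta)$ is the theoretical Haar wavelet variance at level $j$ of the sinusoidal process $S_t=\alpha\sin(\beta t+U)$, $U\sim\mathcal U(0,2\pi)$. *)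

theory Defs
  imports Complex_Main
begin

definition tau :: "nat \<Rightarrow> real" where
  "tau j = 2 ^ j"

definition nu :: "nat \<Rightarrow> real \<Rightarrow> real \<Rightarrow> real" where
  "nu j \<alpha> \<beta> = \<alpha>^2 * (1 - cos (\<beta> * tau j / 2))^2 / ((tau j)^2 * (1 - cos \<beta>))"

end

theory Submission
  imports Defs
begin

lemma nu1: assumes "cos b \<noteq> 1" shows "nu 1 a b = a^2 * (1 - cos b) / 4"
  using assms by (simp add: nu_def tau_def power2_eq_square field_simps)

lemma nu2: assumes "cos b \<noteq> 1" shows "nu 2 a b = a^2 * (1 - cos b) * (1 + cos b)^2 / 4"
proof -
  have "cos (b * tau 2 / 2) = 2 * (cos b)^2 - 1"
    by (simp add: tau_def cos_double_cos[symmetric] mult.commute)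
  hence h: "1 - cos (b * tau 2 / 2) = 2 * (1 - cos b) * (1 + cos b)"
    by (simp add: algebra_simps power2_eq_square)
  have t: "tau 2 = 4" by (simp add: tau_def)
  have ne: "1 - cos b \<noteq> 0" using assms by simp
  have "nu 2 a b = a^2 * (2 * (1 - cos b) * (1 + cos b))^2 / (16 * (1 - cos b))"
    using h unfolding nu_def t by (simp only: ) simp
  also have "\<dots> = a^2 * (1 - cos b) * (1 + cos b)^2 / 4"
    using ne by (simp add: field_simps power2_eq_square)
  finally show ?thesis .
qed

lemma cosne: assumes "0 < b" "b \<le> pi" shows "cos b \<noteq> 1" "cos b < 1" "cos b \<ge> -1"
proof -
  have "cos b < cos 0" using assms by (intro cos_monotone_0_pi) auto
  thus "cos b \<noteq> 1" "cos b < 1" by auto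
  show "cos b \<ge> -1" by simp
qed

theorem lemma2:
  fixes J :: nat and \<alpha>1 \<beta>1 \<alpha>2 \<beta>2 :: real
  assumes "J \<ge> 2"
    and "\<alpha>1 > 0" and "0 < \<beta>1" and "\<beta>1 \<le> pi"
    and "\<alpha>2 > 0" and "0 < \<beta>2" and "\<beta>2 \<le> pi"
    and "\<forall>j\<in>{1..J}. nu j \<alpha>1 \<beta>1 = nu j \<alpha>2 \<beta>2"
  shows "(\<alpha>1, \<beta>1) = (\<alpha>2, \<beta>2)"
proof -
  note c1 = cosne[OF assms(3,4)] and c2 = cosne[OF assms(6,7)]
  have e1: "\<alpha>1^2 * (1 - cos \<beta>1) = \<alpha>2^2 * (1 - cos \<beta>2)"
    using assms(1,8) nu1[OF c1(1), of \<alpha>1] nu1[OF c2(1), of \<alpha>2] by auto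
  have e2: "\<alpha>1^2 * (1 - cos \<beta>1) * (1 + cos \<beta>1)^2 = \<alpha>2^2 * (1 - cos \<beta>2) * (1 + cos \<beta>2)^2"
    using assms(1,8) nu2[OF c1(1), of \<alpha>1] nu2[OF c2(1), of \<alpha>2] by auto
  have pos: "\<alpha>1^2 * (1 - cos \<beta>1) > 0" using assms(2) c1 by simp
  have "(1 + cos \<beta>1)^2 = (1 + cos \<beta>2)^2" using e1 e2 pos by (metis mult_left_cancel less_irrefl)
  hence "1 + cos \<beta>1 = 1 + cos \<beta>2" using c1 c2 by (simp add: power2_eq_iff_nonneg)
  hence cc: "cos \<beta>1 = cos \<beta>2" by simp
  hence b: "\<beta>1 = \<beta>2" using cos_inj_pi assms by (meson less_imp_le)
  have "\<alpha>1^2 = \<alpha>2^2" using e1 cc c1 by simp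
  hence "\<alpha>1 = \<alpha>2" using assms by (simp add: power2_eq_iff_nonneg)
  thus ?thesis using b by simp
qed

end
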